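(* Let $t\ge 4$, $r\ge 3$ and $0\le d\le r-1$ be integers. Then there exists a sufficiently small constant $c=c(t,r)>0$ such that $$C_r(n,S_r(d,t))\ge \min\left\{c\,n^{\frac{1}{2(r-d)+1}},\ c\,n^{\frac{1}{d+1}}\right\}.$$
   Context: An $r$-graph is an $r$-uniform hypergraph; $K_n^{(r)}$ is the complete $r$-graph on $n$ vertices. A copy of an $r$-graph $H$ in $K_n^{(r)}$ is a subhypergraph isomorphic to $H$. An $(n,r,H)$-local coloring with $k$ colors is a family of edge-colorings $f_v:E(K_n^{(r)})\to[k]$, one per vertex $v$, such that for every copy $T$ of $H$ there is $u\in V(T)$ with $f_u$ injective on $E(T)$. $C_r(n,H)$ is the minimum such $k$. A sunflower $S_r(d,m)$ is an $r$-graph with $m$ edges $e_1,\dots,e_m$ such that $e_i\cap e_j=D$ for all distinct $i,j$, where $D$ is a fixed set of $d$ vertices (the core). *)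

theory Defs
  imports Complex_Main
begin

definition complete_edges :: "nat \<Rightarrow> nat \<Rightarrow> nat set set" where
  "complete_edges n r = {e. e \<subseteq> {0..<n} \<and> card e = r}"

definition is_sunflower :: "nat \<Rightarrow> nat \<Rightarrow> nat \<Rightarrow> 'a set \<Rightarrow> 'a set set \<Rightarrow> bool" where
  "is_sunflower r d m V E \<longleftrightarrow>
     finite E \<and> card E = m \<and> (\<forall>e\<in>E. finite e \<and> card e = r) \<and> V = \<Union>E \<and>
     (\<exists>D. card D = d \<and> (\<forall>e\<in>E. \<forall>e'\<in>E. e \<noteq> e' \<longrightarrow> e \<inter> e' = D))"

text \<open>Copies of S_r(d,m) in K_n^(r): subhypergraphs (given by their edge sets,
  vertex set = union of edges) which are sunflowers S_r(d,m).\<close>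
definition sunflower_copies :: "nat \<Rightarrow> nat \<Rightarrow> nat \<Rightarrow> nat \<Rightarrow> nat set set set" where
  "sunflower_copies n r d m =
     {T. T \<subseteq> complete_edges n r \<and> is_sunflower r d m (\<Union>T) T}"

text \<open>(n,r,S_r(d,m))-local colouring with k colours: f v is the colouring of vertex v.\<close>
definition local_coloring :: "nat \<Rightarrow> nat \<Rightarrow> nat \<Rightarrow> nat \<Rightarrow> nat \<Rightarrow> (nat \<Rightarrow> nat set \<Rightarrow> nat) \<Rightarrow> bool" where
  "local_coloring n r d m k f \<longleftrightarrow>
     (\<forall>v\<in>{0..<n}. \<forall>e\<in>complete_edges n r. f v e \<in> {0..<k}) \<and>
     (\<forall>T\<in>sunflower_copies n r d m. \<exists>u\<in>\<Union>T. inj_on (f u) T)"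

definition C_sunflower :: "nat \<Rightarrow> nat \<Rightarrow> nat \<Rightarrow> nat \<Rightarrow> nat" where
  "C_sunflower r n d m = (LEAST k. \<exists>f. local_coloring n r d m k f)"

end

theory Submission
  imports Defs "HOL-Library.FuncSet"
begin


lemma pigeon:
  assumes "finite X" "finite Y" "g ` X \<subseteq> Y" "card Y * q < card X"
  shows "\<exists>y\<in>Y. q < card {x\<in>X. g x = y}"
proof (rule ccontr)
  assume "\<not> ?thesis"
  hence le: "\<forall>y\<in>Y. card {x\<in>X. g x = y} \<le> q" by auto
  have "X = (\<Union>y\<in>Y. {x\<in>X. g x = y})" using assms(3) by auto
  hence "card X = card (\<Union>y\<in>Y. {x\<in>X. g x = y})" by simp
  also have "\<dots> = (\<Sum>y\<in>Y. card {x\<in>X. g x = y})"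
    by (rule card_UN_disjoint) (use assms in auto)
  also have "\<dots> \<le> (\<Sum>y\<in>Y. q)" by (rule sum_mono) (use le in auto)
  also have "\<dots> = card Y * q" by simp
  finally show False using assms(4) by simp
qed

lemma coll_bound:
  fixes g :: "nat \<Rightarrow> nat"
  assumes "finite U" "g ` U \<subseteq> {0..<k}"
  shows "card U \<le> card {(i,j). i\<in>U \<and> j\<in>U \<and> i\<noteq>j \<and> g i = g j} + k"
proof -
  define rep where "rep c = Min {x\<in>U. g x = c}" for c
  define R where "R = rep ` (g ` U)"
  have repin: "rep (g x) \<in> U \<and> g (rep (g x)) = g x" if "x \<in> U" for x
  proof -
    have "finite {y\<in>U. g y = g x}" "{y\<in>U. g y = g x} \<noteq> {}" using assms(1) that by auto
    from Min_in[OF this] show ?thesis unfolding rep_def by auto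
  qed
  have cR: "card R \<le> k"
  proof -
    have "card R \<le> card (g ` U)" unfolding R_def by (rule card_image_le) (use assms in auto)
    also have "\<dots> \<le> card {0..<k}" by (rule card_mono) (use assms in auto)
    finally show ?thesis by simp
  qed
  have RU: "R \<subseteq> U" unfolding R_def using repin by auto
  have "inj_on (\<lambda>x. (rep (g x), x)) (U - R)" by (auto simp: inj_on_def)
  moreover have "(\<lambda>x. (rep (g x), x)) ` (U - R) \<subseteq> {(i,j). i\<in>U \<and> j\<in>U \<and> i\<noteq>j \<and> g i = g j}"
    using repin unfolding R_def by force
  moreover have "finite {(i,j). i\<in>U \<and> j\<in>U \<and> i\<noteq>j \<and> g i = g j}"
    by (rule finite_subset[of _ "U \<times> U"]) (use assms in auto)
  ultimately have "card (U - R) \<le> card {(i,j). i\<in>U \<and> j\<in>U \<and> i\<noteq>j \<and> g i = g j}"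
  proof -
    assume a: "inj_on (\<lambda>x. (rep (g x), x)) (U - R)"
      "(\<lambda>x. (rep (g x), x)) ` (U - R) \<subseteq> {(i,j). i\<in>U \<and> j\<in>U \<and> i\<noteq>j \<and> g i = g j}"
      "finite {(i,j). i\<in>U \<and> j\<in>U \<and> i\<noteq>j \<and> g i = g j}"
    have "card (U - R) = card ((\<lambda>x. (rep (g x), x)) ` (U - R))" using card_image[OF a(1)] by simp
    also have "\<dots> \<le> card {(i,j). i\<in>U \<and> j\<in>U \<and> i\<noteq>j \<and> g i = g j}" by (rule card_mono[OF a(3) a(2)])
    finally show ?thesis .
  qed
  moreover have "card (U - R) = card U - card R"
    using RU assms(1) by (simp add: card_Diff_subset finite_subset)
  moreover have "card R \<le> card U" using RU assms(1) by (simp add: card_mono)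
  ultimately show ?thesis using cR by linarith
qed

lemma double_count:
  assumes "finite P" "finite B"
  shows "(\<Sum>w\<in>B. card {p\<in>P. R w p}) = (\<Sum>p\<in>P. card {w\<in>B. R w p})"
proof -
  have "(\<Sum>w\<in>B. card {p\<in>P. R w p}) = (\<Sum>w\<in>B. \<Sum>p\<in>P. if R w p then 1 else 0)"
    using assms by (simp add: sum.If_cases Int_def)
  also have "\<dots> = (\<Sum>p\<in>P. \<Sum>w\<in>B. if R w p then 1 else 0)" by (rule sum.swap)
  also have "\<dots> = (\<Sum>p\<in>P. card {w\<in>B. R w p})"
    using assms by (simp add: sum.If_cases Int_def)
  finally show ?thesis .
qed

lemma average:
  fixes h :: "'a \<Rightarrow> nat"
  assumes "finite P" "P \<noteq> {}" "X \<le> (\<Sum>p\<in>P. h p)"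
  shows "\<exists>p\<in>P. X \<le> card P * h p"
proof (rule ccontr)
  assume "\<not> ?thesis"
  hence lt: "\<forall>p\<in>P. card P * h p < X" by auto
  have "card P * (\<Sum>p\<in>P. h p) = (\<Sum>p\<in>P. card P * h p)" by (simp add: sum_distrib_left)
  also have "\<dots> < (\<Sum>p\<in>P. X)" by (rule sum_strict_mono) (use assms lt in auto)
  also have "\<dots> = card P * X" by simp
  finally have "(\<Sum>p\<in>P. h p) < X" by simp
  thus False using assms(3) by simp
qed

lemma sunflower_mk:
  assumes "finite Pset" "card Pset = t" "card D = d" "finite D"
   "\<forall>P\<in>Pset. finite P \<and> card P = m \<and> P \<inter> D = {} \<and> D \<union> P \<subseteq> {0..<n}"
   "\<forall>P\<in>Pset. \<forall>Q\<in>Pset. P \<noteq> Q \<longrightarrow> P \<inter> Q = {}" "r = d + m"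
  shows "(\<lambda>P. D \<union> P) ` Pset \<in> sunflower_copies n r d t"
proof -
  have inj: "inj_on (\<lambda>P. D \<union> P) Pset"
  proof (rule inj_onI)
    fix P Q assume "P \<in> Pset" "Q \<in> Pset" "D \<union> P = D \<union> Q"
    hence "(D \<union> P) - D = (D \<union> Q) - D" by simp
    moreover have "(D \<union> P) - D = P" "(D \<union> Q) - D = Q" using assms(5) \<open>P \<in> Pset\<close> \<open>Q \<in> Pset\<close> by auto
    ultimately show "P = Q" by simp
  qed
  have cardE: "card (D \<union> P) = r" if "P \<in> Pset" for P
    using assms that by (subst card_Un_disjoint) auto
  have sub: "(\<lambda>P. D \<union> P) ` Pset \<subseteq> complete_edges n r"
    using assms cardE unfolding complete_edges_def by auto
  have "is_sunflower r d t (\<Union>((\<lambda>P. D \<union> P) ` Pset)) ((\<lambda>P. D \<union> P) ` Pset)"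
    unfolding is_sunflower_def
  proof (intro conjI)
    show "card ((\<lambda>P. D \<union> P) ` Pset) = t" using card_image[OF inj] assms by simp
    show "\<forall>e\<in>(\<lambda>P. D \<union> P) ` Pset. finite e \<and> card e = r" using assms cardE by auto
    show "\<exists>Da. card Da = d \<and> (\<forall>e\<in>(\<lambda>P. D \<union> P) ` Pset. \<forall>e'\<in>(\<lambda>P. D \<union> P) ` Pset. e \<noteq> e' \<longrightarrow> e \<inter> e' = Da)"
    proof (rule exI[of _ D], intro conjI ballI impI)
      show "card D = d" by fact
      fix e e' assume "e \<in> (\<lambda>P. D \<union> P) ` Pset" "e' \<in> (\<lambda>P. D \<union> P) ` Pset" "e \<noteq> e'"
      then obtain P Q where "P \<in> Pset" "Q \<in> Pset" "e = D \<union> P" "e' = D \<union> Q" "P \<noteq> Q" by auto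
      thus "e \<inter> e' = D" using assms(6) by auto
    qed
  qed (use assms in auto)
  thus ?thesis using sub unfolding sunflower_copies_def by auto
qed



lemma core:
  fixes n r d t k :: nat and f :: "nat \<Rightarrow> nat set \<Rightarrow> nat"
  assumes lc: "local_coloring n r d t k f" and t4: "4 \<le> t" and dr: "d < r" and k1: "1 \<le> k"
  and big: "d + 2*(r-d)*k^(d+1) + 4*k*((r-d)*((t-3)*k^(2*(r-d))+1)) \<le> n"
  shows False
proof -
  define m where "m = r - d"
  have m1: "1 \<le> m" and rdm: "r = d + m" using dr by (auto simp: m_def)
  define L where "L = 2*k^(d+1)"
  define D where "D = {0..<d}"
  define blk where "blk i = {d+i*m..<d+i*m+m}" for i
  define a0 where "a0 = d + L*m"
  define B where "B = {a0..<n}"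
  have big': "a0 + 4*k*(m*((t-3)*k^(2*m)+1)) \<le> n"
    using big unfolding a0_def L_def m_def by (simp add: algebra_simps)
  have cardB: "4*k*(m*((t-3)*k^(2*m)+1)) \<le> card B" using big' unfolding B_def by simp
  have a0n: "a0 \<le> n" using big' by simp
  have dn: "d \<le> a0" unfolding a0_def by simp
  have colors: "f v e < k" if "v < n" "e \<in> complete_edges n r" for v e
    using lc that unfolding local_coloring_def by auto
  have finD: "finite D" and cardD: "card D = d" unfolding D_def by auto
  have edge: "D \<union> P \<in> complete_edges n r" if "P \<subseteq> {d..<n}" "card P = m" for P
  proof -
    have "finite P" using that(1) finite_subset by blast
    moreover have "P \<inter> D = {}" using that(1) unfolding D_def by auto
    ultimately have "card (D \<union> P) = r" using that finD cardD rdm by (subst card_Un_disjoint) auto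
    moreover have "D \<union> P \<subseteq> {0..<n}" using that(1) dn a0n unfolding D_def by auto
    ultimately show ?thesis unfolding complete_edges_def by auto
  qed
  have blk_sub: "blk i \<subseteq> {d..<a0}" if "i < L" for i
  proof -
    have "(i+1)*m \<le> L*m" using that by (intro mult_le_mono1) simp
    thus ?thesis unfolding blk_def a0_def by (auto simp: algebra_simps)
  qed
  have blk_card: "card (blk i) = m" for i unfolding blk_def by simp
  have blk_ne: "blk i \<noteq> {}" for i using blk_card m1 by (metis card.empty not_one_le_zero)
  have blk_disj: "blk i \<inter> blk j = {}" if "i \<noteq> j" for i j
  proof -
    have *: "blk i \<inter> blk j = {}" if "i < j" for i j
    proof -
      have "(i+1)*m \<le> j*m" using that by (intro mult_le_mono1) simp
      thus ?thesis unfolding blk_def by (auto simp: algebra_simps)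
    qed
    show ?thesis using that *[of i j] *[of j i] by (cases "i < j") (auto simp: Int_commute)
  qed
  have blk_edge: "D \<union> blk i \<in> complete_edges n r" if "i < L" for i
  proof -
    have "blk i \<subseteq> {d..<n}" using blk_sub[OF that] a0n by auto
    thus ?thesis using edge blk_card by blast
  qed
  define chiD where "chiD i = restrict (\<lambda>v. f v (D \<union> blk i)) D" for i
  have chiD_in: "chiD ` {0..<L} \<subseteq> (\<Pi>\<^sub>E v\<in>D. {0..<k})"
  proof (rule image_subsetI)
    fix i assume "i \<in> {0..<L}"
    have "f v (D \<union> blk i) < k" if "v \<in> D" for v
      using that dn a0n \<open>i \<in> {0..<L}\<close> by (intro colors blk_edge) (auto simp: D_def)
    thus "chiD i \<in> (\<Pi>\<^sub>E v\<in>D. {0..<k})" unfolding chiD_def by auto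
  qed
  have cardPi: "card (\<Pi>\<^sub>E v\<in>D. {0..<k}) = k^d" using finD cardD by (simp add: card_PiE)
  have "card (\<Pi>\<^sub>E v\<in>D. {0..<k}) * (2*k-1) < card {0..<L}"
  proof -
    have "k^d*(2*k-1) < k^d * (2*k)" using k1 by simp
    thus ?thesis unfolding cardPi L_def by (simp add: algebra_simps)
  qed
  then obtain y where "2*k - 1 < card {i\<in>{0..<L}. chiD i = y}"
    using pigeon[OF _ _ chiD_in] finD by (auto simp: finite_PiE)
  hence "2*k \<le> card {i\<in>{0..<L}. chiD i = y}" by simp
  then obtain U where U: "U \<subseteq> {i\<in>{0..<L}. chiD i = y}" "card U = 2*k" "finite U"
    by (meson obtain_subset_with_card_n)
  have UL: "i < L" if "i \<in> U" for i using U that by auto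
  have Ucore: "f v (D \<union> blk i) = f v (D \<union> blk j)" if "i \<in> U" "j \<in> U" "v \<in> D" for i j v
  proof -
    have "chiD i = chiD j" using U that by auto
    hence "chiD i v = chiD j v" by simp
    thus ?thesis using that(3) unfolding chiD_def by simp
  qed
  define Pairs where "Pairs = {(i,j). i\<in>U \<and> j\<in>U \<and> i\<noteq>j}"
  define Rl where "Rl w p = (f w (D \<union> blk (fst p)) = f w (D \<union> blk (snd p)))" for w p
  have finPairs: "finite Pairs" unfolding Pairs_def
    by (rule finite_subset[of _ "U \<times> U"]) (use U in auto)
  have cardPairs: "card Pairs \<le> 4*k*k"
  proof -
    have "card Pairs \<le> card (U \<times> U)" unfolding Pairs_def by (rule card_mono) (use U in auto)
    thus ?thesis using U by (simp add: card_cartesian_product)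
  qed
  have finB: "finite B" unfolding B_def by simp
  have collw: "k \<le> card {p\<in>Pairs. Rl w p}" if "w \<in> B" for w
  proof -
    define g where "g i = f w (D \<union> blk i)" for i
    have "g ` U \<subseteq> {0..<k}" using colors UL blk_edge that unfolding g_def B_def by auto
    from coll_bound[OF U(3) this]
    have "card U \<le> card {(i,j). i\<in>U \<and> j\<in>U \<and> i\<noteq>j \<and> g i = g j} + k" .
    moreover have "{(i,j). i\<in>U \<and> j\<in>U \<and> i\<noteq>j \<and> g i = g j} = {p\<in>Pairs. Rl w p}"
      unfolding Pairs_def Rl_def g_def by auto
    ultimately show ?thesis using U by simp
  qed
  have "card B * k \<le> (\<Sum>w\<in>B. card {p\<in>Pairs. Rl w p})"
    using sum_mono[of B "\<lambda>_. k" "\<lambda>w. card {p\<in>Pairs. Rl w p}"] collw by simp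
  also have "\<dots> = (\<Sum>p\<in>Pairs. card {w\<in>B. Rl w p})" by (rule double_count[OF finPairs finB])
  finally have sumge: "card B * k \<le> (\<Sum>p\<in>Pairs. card {w\<in>B. Rl w p})" .
  have "Pairs \<noteq> {}"
  proof -
    have "2 \<le> card U" using U k1 by simp
    then obtain i j where "i \<in> U" "j \<in> U" "i \<noteq> j"
      by (metis One_nat_def card_le_Suc0_iff_eq not_less_eq_eq numeral_2_eq_2 U(3))
    thus ?thesis unfolding Pairs_def by auto
  qed
  from average[OF finPairs this sumge] obtain p where p: "p \<in> Pairs"
    "card B * k \<le> card Pairs * card {w\<in>B. Rl w p}" by blast
  obtain i1 i2 where pe: "p = (i1,i2)" "i1 \<in> U" "i2 \<in> U" "i1 \<noteq> i2" using p(1) unfolding Pairs_def by auto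
  define S where "S = {w\<in>B. Rl w p}"
  have "card B * k \<le> (4*k*k) * card S"
    using p(2) cardPairs unfolding S_def by (meson le_trans mult_le_mono1)
  hence "card B \<le> 4*k * card S" using k1 by (simp add: algebra_simps)
  with cardB have "4*k*(m*((t-3)*k^(2*m)+1)) \<le> 4*k*card S" by linarith
  hence cardS: "m*((t-3)*k^(2*m)+1) \<le> card S" using k1 by simp
  have SB: "S \<subseteq> B" unfolding S_def by auto
  have Sserv: "f w (D \<union> blk i1) = f w (D \<union> blk i2)" if "w \<in> S" for w
    using that pe unfolding S_def Rl_def by auto
  have finS: "finite S" using SB finB finite_subset by blast
  obtain phi where phi: "bij_betw phi {0..<card S} S" using ex_bij_betw_nat_finite[OF finS] by blast
  define Nb where "Nb = card S div m"
  have Nb: "(t-3)*k^(2*m)+1 \<le> Nb" unfolding Nb_def using cardS m1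
    by (simp add: less_eq_div_iff_mult_less_eq mult.commute)
  define Bl where "Bl j = phi ` {j*m..<j*m+m}" for j
  have Bl_range: "{j*m..<j*m+m} \<subseteq> {0..<card S}" if "j < Nb" for j
  proof -
    have "(j+1)*m \<le> Nb*m" using that by (intro mult_le_mono1) simp
    moreover have "Nb * m \<le> card S" unfolding Nb_def by simp
    ultimately show ?thesis by (auto simp: algebra_simps)
  qed
  have injphi: "inj_on phi {0..<card S}" using phi bij_betw_def by blast
  have Bl_sub: "Bl j \<subseteq> S" if "j < Nb" for j
    using Bl_range[OF that] phi unfolding Bl_def bij_betw_def by auto
  have Bl_card: "card (Bl j) = m" if "j < Nb" for j
    unfolding Bl_def using Bl_range[OF that] injphi
    by (subst card_image) (auto intro: inj_on_subset)
  have Bl_ne: "Bl j \<noteq> {}" if "j < Nb" for j using Bl_card[OF that] m1 by (metis card.empty not_one_le_zero)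
  have Bl_disj: "Bl i \<inter> Bl j = {}" if "i < Nb" "j < Nb" "i \<noteq> j" for i j
  proof -
    have *: "{i*m..<i*m+m} \<inter> {j*m..<j*m+m} = {}" if "i < j" for i j
    proof -
      have "(i+1)*m \<le> j*m" using that by (intro mult_le_mono1) simp
      thus ?thesis by (auto simp: algebra_simps)
    qed
    have "{i*m..<i*m+m} \<inter> {j*m..<j*m+m} = {}"
      using that *[of i j] *[of j i] by (cases "i < j") (auto simp: Int_commute)
    moreover have "Bl i \<inter> Bl j = phi ` ({i*m..<i*m+m} \<inter> {j*m..<j*m+m})"
      unfolding Bl_def
      by (rule inj_on_image_Int[symmetric, OF injphi Bl_range[OF that(1)] Bl_range[OF that(2)]])
    ultimately show ?thesis by simp
  qed
  have SnB: "S \<subseteq> {a0..<n}" using SB unfolding B_def .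
  have Bl_edge: "D \<union> Bl j \<in> complete_edges n r" if "j < Nb" for j
    using edge[of "Bl j"] Bl_sub[OF that] SnB Bl_card[OF that] dn by force
  define P12 where "P12 = blk i1 \<union> blk i2"
  have finP12: "finite P12" unfolding P12_def blk_def by simp
  have cardP12: "card P12 = 2*m" unfolding P12_def
    using blk_disj[OF pe(4)] blk_card by (subst card_Un_disjoint) (auto simp: blk_def)
  have P12n: "P12 \<subseteq> {0..<n}" unfolding P12_def using blk_sub UL pe a0n by fastforce
  define chi where "chi j = restrict (\<lambda>v. f v (D \<union> Bl j)) P12" for j
  have chi_in: "chi ` {0..<Nb} \<subseteq> (\<Pi>\<^sub>E v\<in>P12. {0..<k})"
    using colors Bl_edge P12n unfolding chi_def by auto
  have cardPi2: "card (\<Pi>\<^sub>E v\<in>P12. {0..<k}) = k^(2*m)" using finP12 cardP12 by (simp add: card_PiE)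
  have "card (\<Pi>\<^sub>E v\<in>P12. {0..<k}) * (t-3) < card {0..<Nb}"
    using Nb unfolding cardPi2 by (simp add: algebra_simps)
  then obtain y2 where "t - 3 < card {j\<in>{0..<Nb}. chi j = y2}"
    using pigeon[OF _ _ chi_in] finP12 by (auto simp: finite_PiE)
  hence "t - 2 \<le> card {j\<in>{0..<Nb}. chi j = y2}" by simp
  then obtain J where J: "J \<subseteq> {j\<in>{0..<Nb}. chi j = y2}" "card J = t - 2" "finite J"
    by (meson obtain_subset_with_card_n)
  have JN: "j < Nb" if "j \<in> J" for j using J that by auto
  have Jcol: "f v (D \<union> Bl i) = f v (D \<union> Bl j)" if "i \<in> J" "j \<in> J" "v \<in> P12" for i j v
  proof -
    have "chi i = chi j" using J that by auto
    hence "chi i v = chi j v" by simp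
    thus ?thesis using that(3) unfolding chi_def by simp
  qed
  obtain j1 j2 where jj: "j1 \<in> J" "j2 \<in> J" "j1 \<noteq> j2"
  proof -
    have "2 \<le> card J" using J t4 by simp
    thus ?thesis using that
      by (metis One_nat_def card_le_Suc0_iff_eq not_less_eq_eq numeral_2_eq_2 J(3))
  qed
  define Pset where "Pset = {blk i1, blk i2} \<union> Bl ` J"
  define T where "T = (\<lambda>P. D \<union> P) ` Pset"
  have blkA: "blk i \<subseteq> {d..<a0}" if "i \<in> U" for i using blk_sub UL that by blast
  have BlB: "Bl j \<subseteq> {a0..<n}" if "j \<in> J" for j using Bl_sub JN that SnB by blast
  have blkBl: "blk i \<noteq> Bl j" if "i \<in> U" "j \<in> J" for i j
  proof
    assume "blk i = Bl j"
    moreover obtain x where "x \<in> blk i" using blk_ne[of i] by blast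
    ultimately have "x \<in> {d..<a0}" "x \<in> {a0..<n}" using blkA[OF that(1)] BlB[OF that(2)] by auto
    then show False by simp
  qed
  have injBl: "inj_on Bl J"
  proof (rule inj_onI)
    fix i j assume "i \<in> J" "j \<in> J" "Bl i = Bl j"
    thus "i = j" using Bl_disj[of i j] Bl_ne[of i] JN by auto
  qed
  have blk12: "blk i1 \<noteq> blk i2" using blk_disj[OF pe(4)] blk_ne by auto
  have cardPset: "card Pset = t"
  proof -
    have "card Pset = card {blk i1, blk i2} + card (Bl ` J)"
      unfolding Pset_def using blkBl pe J(3) by (subst card_Un_disjoint) auto
    also have "\<dots> = 2 + (t - 2)" using blk12 card_image[OF injBl] J by simp
    finally show ?thesis using t4 by simp
  qed
  have finPset: "finite Pset" unfolding Pset_def using J by simp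
  have Pprops: "\<forall>P\<in>Pset. finite P \<and> card P = m \<and> P \<inter> D = {} \<and> D \<union> P \<subseteq> {0..<n}"
  proof
    fix P assume "P \<in> Pset"
    then consider "P = blk i1" | "P = blk i2" | j where "j \<in> J" "P = Bl j" unfolding Pset_def by auto
    thus "finite P \<and> card P = m \<and> P \<inter> D = {} \<and> D \<union> P \<subseteq> {0..<n}"
    proof cases
      case 1
      have "D \<union> blk i1 \<subseteq> {0..<n}" using blk_edge UL pe(2) unfolding complete_edges_def by auto
      moreover have "blk i1 \<inter> D = {}" using blkA[OF pe(2)] unfolding D_def by auto
      ultimately show ?thesis using 1 blk_card by (simp add: blk_def)
    next
      case 2
      have "D \<union> blk i2 \<subseteq> {0..<n}" using blk_edge UL pe(3) unfolding complete_edges_def by auto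
      moreover have "blk i2 \<inter> D = {}" using blkA[OF pe(3)] unfolding D_def by auto
      ultimately show ?thesis using 2 blk_card by (simp add: blk_def)
    next
      case 3
      have "D \<union> Bl j \<subseteq> {0..<n}" using Bl_edge JN 3(1) unfolding complete_edges_def by auto
      moreover have "Bl j \<inter> D = {}" using BlB[OF 3(1)] dn unfolding D_def by auto
      moreover have "finite (Bl j)" unfolding Bl_def by simp
      ultimately show ?thesis using 3 Bl_card JN by simp
    qed
  qed
  have Pdisj: "\<forall>P\<in>Pset. \<forall>Q\<in>Pset. P \<noteq> Q \<longrightarrow> P \<inter> Q = {}"
  proof (intro ballI impI)
    fix P Q assume "P \<in> Pset" "Q \<in> Pset" "P \<noteq> Q"
    have AB: "X \<inter> Y = {}" if "X \<subseteq> {d..<a0}" "Y \<subseteq> {a0..<n}" for X Y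
    proof -
      have "x \<notin> Y" if "x \<in> X" for x using that \<open>X \<subseteq> {d..<a0}\<close> \<open>Y \<subseteq> {a0..<n}\<close> by fastforce
      thus ?thesis by blast
    qed
    have cP: "(\<exists>i\<in>U. X = blk i) \<or> (\<exists>j\<in>J. X = Bl j)" if "X \<in> Pset" for X
      using that pe unfolding Pset_def by blast
    show "P \<inter> Q = {}"
    proof (cases "\<exists>i\<in>U. P = blk i")
      case True
      then obtain i where i: "i \<in> U" "P = blk i" by blast
      show ?thesis
      proof (cases "\<exists>i\<in>U. Q = blk i")
        case True
        then obtain i' where "i' \<in> U" "Q = blk i'" by blast
        hence "i \<noteq> i'" using i \<open>P \<noteq> Q\<close> by auto
        thus ?thesis using blk_disj[OF \<open>i \<noteq> i'\<close>] i \<open>Q = blk i'\<close> by simp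
      next
        case False
        then obtain j where "j \<in> J" "Q = Bl j" using cP[OF \<open>Q \<in> Pset\<close>] by blast
        thus ?thesis using i AB[OF blkA[OF i(1)] BlB[OF \<open>j \<in> J\<close>]] by simp
      qed
    next
      case False
      then obtain j where j: "j \<in> J" "P = Bl j" using cP[OF \<open>P \<in> Pset\<close>] by blast
      show ?thesis
      proof (cases "\<exists>i\<in>U. Q = blk i")
        case True
        then obtain i' where i': "i' \<in> U" "Q = blk i'" by blast
        have "Q \<inter> P = {}" using i' j AB[OF blkA[OF i'(1)] BlB[OF j(1)]] by simp
        thus ?thesis by (simp add: Int_commute)
      next
        case False
        then obtain j' where j': "j' \<in> J" "Q = Bl j'" using cP[OF \<open>Q \<in> Pset\<close>] by blast
        hence "j \<noteq> j'" using j \<open>P \<noteq> Q\<close> by auto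
        thus ?thesis using Bl_disj[OF JN[OF j(1)] JN[OF j'(1)]] j j' by simp
      qed
    qed
  qed
  have Tin: "T \<in> sunflower_copies n r d t"
    unfolding T_def by (rule sunflower_mk[OF finPset cardPset cardD finD Pprops Pdisj rdm])
  then obtain u where u: "u \<in> \<Union>T" "inj_on (f u) T"
    using lc unfolding local_coloring_def by blast
  have dist: "D \<union> P \<noteq> D \<union> Q" if "P \<in> Pset" "Q \<in> Pset" "P \<noteq> Q" for P Q
  proof
    assume "D \<union> P = D \<union> Q"
    hence "(D \<union> P) - D = (D \<union> Q) - D" by simp
    moreover have "(D \<union> P) - D = P" "(D \<union> Q) - D = Q" using Pprops that by auto
    ultimately show False using that by simp
  qed
  have noninj: False if "P \<in> Pset" "Q \<in> Pset" "P \<noteq> Q" "f u (D \<union> P) = f u (D \<union> Q)" for P Q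
    using u(2) dist[OF that(1-3)] that unfolding T_def inj_on_def by blast
  have in12: "blk i1 \<in> Pset" "blk i2 \<in> Pset" unfolding Pset_def by auto
  from u(1) obtain e where e: "e \<in> T" "u \<in> e" by blast
  then obtain P where P: "P \<in> Pset" "u \<in> D \<union> P" unfolding T_def by blast
  have inJ: "Bl j1 \<in> Pset" "Bl j2 \<in> Pset" "Bl j1 \<noteq> Bl j2"
    using jj injBl unfolding Pset_def inj_on_def by auto
  show False
  proof (cases "u \<in> D")
    case True
    show False using noninj[OF in12 blk12 Ucore[OF pe(2) pe(3) True]] .
  next
    case False
    hence uP: "u \<in> P" using P by auto
    from P(1) consider "P = blk i1" | "P = blk i2" | j where "j \<in> J" "P = Bl j" unfolding Pset_def by auto
    thus False
    proof cases
      case 1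
      hence "u \<in> P12" using uP unfolding P12_def by auto
      show False by (rule noninj[OF inJ Jcol[OF jj(1) jj(2) \<open>u \<in> P12\<close>]])
    next
      case 2
      hence "u \<in> P12" using uP unfolding P12_def by auto
      show False by (rule noninj[OF inJ Jcol[OF jj(1) jj(2) \<open>u \<in> P12\<close>]])
    next
      case 3
      hence "u \<in> S" using uP Bl_sub JN by blast
      show False by (rule noninj[OF in12 blk12 Sserv[OF \<open>u \<in> S\<close>]])
    qed
  qed
qed



lemma bound:
  fixes n r d t k :: nat
  assumes lc: "local_coloring n r d t k f" and t4: "4 \<le> t" and dr: "d < r" and rn: "r \<le> n"
  shows "1 \<le> k \<and> n < (d + 2*(r-d) + 4*(r-d)*(t-2)) * k^(max (2*(r-d)+1) (d+1))"
proof -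
  have "{0..<r} \<in> complete_edges n r" using rn unfolding complete_edges_def by auto
  moreover have "(0::nat) \<in> {0..<n}" using rn dr by auto
  ultimately have "f 0 {0..<r} < k" using lc unfolding local_coloring_def by auto
  hence k1: "1 \<le> k" by simp
  define m where "m = r - d"
  define E where "E = max (2*m+1) (d+1)"
  define K where "K = k^E"
  have K1: "1 \<le> K" unfolding K_def using k1 by simp
  have Kd: "k^(d+1) \<le> K" unfolding K_def E_def using k1 by (intro power_increasing) auto
  have Km: "k*k^(2*m) \<le> K" unfolding K_def E_def using k1
    by (metis max.cobounded1 power_Suc power_increasing Suc_eq_plus1 add.commute)
  have Kk: "k \<le> K" using k1 Kd by (metis le_trans power_increasing le_add2 power_one_right)
  have "d + 2*m*k^(d+1) + 4*k*(m*((t-3)*k^(2*m)+1))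
      = d + 2*m*k^(d+1) + 4*m*(t-3)*(k*k^(2*m)) + 4*m*k" by (simp add: algebra_simps)
  also have "\<dots> \<le> d*K + 2*m*K + 4*m*(t-3)*K + 4*m*K"
    using K1 Kd Km Kk by (intro add_mono mult_le_mono) auto
  also have "\<dots> = (d + 2*m + 4*m*((t-3)+1))*K" by (simp add: algebra_simps)
  also have "(t-3)+1 = t-2" using t4 by simp
  finally have le: "d + 2*m*k^(d+1) + 4*k*(m*((t-3)*k^(2*m)+1)) \<le> (d + 2*m + 4*m*(t-2))*K" .
  have "n < (d + 2*m + 4*m*(t-2))*K"
  proof (rule ccontr)
    assume "\<not> ?thesis"
    hence "d + 2*(r-d)*k^(d+1) + 4*k*((r-d)*((t-3)*k^(2*(r-d))+1)) \<le> n" using le unfolding m_def by linarith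
    from core[OF lc t4 dr k1 this] show False .
  qed
  thus ?thesis using k1 unfolding K_def E_def m_def by simp
qed

lemma exists_col:
  assumes "1 \<le> t" "1 \<le> r"
  shows "\<exists>k f. local_coloring n r d t k f"
proof -
  have fin: "finite (complete_edges n r)" unfolding complete_edges_def
    by (rule finite_subset[of _ "Pow {0..<n}"]) auto
  obtain h where h: "bij_betw h (complete_edges n r) {0..<card (complete_edges n r)}"
    using ex_bij_betw_finite_nat[OF fin] by metis
  have "local_coloring n r d t (card (complete_edges n r)) (\<lambda>v e. h e)"
    unfolding local_coloring_def
  proof (intro conjI ballI)
    fix v e assume "e \<in> complete_edges n r"
    thus "h e \<in> {0..<card (complete_edges n r)}" by (rule bij_betw_apply[OF h])
  next
    fix T assume T: "T \<in> sunflower_copies n r d t"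
    hence sub: "T \<subseteq> complete_edges n r" and sf: "is_sunflower r d t (\<Union>T) T"
      unfolding sunflower_copies_def by auto
    have cT: "card T = t" using sf[unfolded is_sunflower_def] by (elim conjE)
    have "T \<noteq> {}" using cT assms by (metis card.empty not_one_le_zero)
    then obtain e where e: "e \<in> T" by blast
    have "\<forall>e\<in>T. finite e \<and> card e = r" using sf[unfolded is_sunflower_def] by (elim conjE)
    hence "card e = r" using e by blast
    hence "e \<noteq> {}" using assms by (metis card.empty not_one_le_zero)
    then obtain u where "u \<in> e" by blast
    hence "u \<in> \<Union>T" using e by blast
    moreover have "inj_on h T" by (rule inj_on_subset[OF bij_betw_imp_inj_on[OF h] sub])
    ultimately show "\<exists>u\<in>\<Union>T. inj_on (\<lambda>e. h e) T" by auto
  qed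
  thus ?thesis by blast
qed

theorem theorem4:
  fixes t r d :: nat
  assumes "t \<ge> 4" and "r \<ge> 3" and "d \<le> r - 1"
  shows "\<exists>c>0. \<forall>n\<ge>r.
    real (C_sunflower r n d t) \<ge>
      min (c * real n powr (1 / (2 * (real r - real d) + 1))) (c * real n powr (1 / (real d + 1)))"
proof -
  have dr: "d < r" using assms by simp
  define M where "M = d + 2*(r-d) + 4*(r-d)*(t-2)"
  define E where "E = max (2*(r-d)+1) (d+1)"
  have M1: "1 \<le> M" unfolding M_def using dr by simp
  have E1: "1 \<le> E" unfolding E_def by simp
  define c where "c = 1 / (real M powr (1 / real E))"
  have cpos: "c > 0" unfolding c_def using M1 by simp
  show ?thesis
  proof (rule exI[of _ c], intro conjI allI impI)
    show "c > 0" by fact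
    fix n assume rn: "r \<le> n"
    define k0 where "k0 = C_sunflower r n d t"
    have "\<exists>f. local_coloring n r d t k0 f"
      unfolding k0_def C_sunflower_def
      by (rule LeastI_ex[OF exists_col[of t r n d]]) (use assms in simp_all)
    then obtain f where f: "local_coloring n r d t k0 f" by blast
    from bound[OF f _ dr rn] assms have b: "1 \<le> k0" "n < M * k0^E"
      unfolding M_def E_def by auto
    have "real n \<le> real M * real k0 ^ E" using b(2) by (metis less_imp_le of_nat_le_iff of_nat_mult of_nat_power)
    hence "real n powr (1/real E) \<le> (real M * real k0 ^ E) powr (1/real E)"
      by (intro powr_mono2) auto
    also have "\<dots> = real M powr (1/real E) * (real k0 ^ E) powr (1/real E)"
      by (rule powr_mult)
    also have "(real k0 ^ E) powr (1/real E) = real k0"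
    proof -
      have "(real k0 ^ E) powr (1/real E) = (real k0 powr real E) powr (1/real E)"
        using b(1) by (simp add: powr_realpow)
      also have "\<dots> = real k0" using E1 b(1) by (simp add: powr_powr)
      finally show ?thesis .
    qed
    finally have "real n powr (1/real E) \<le> real M powr (1/real E) * real k0" .
    hence main: "c * real n powr (1/real E) \<le> real k0"
      unfolding c_def using M1 by (simp add: field_simps)
    have "min (c * real n powr (1 / (2 * (real r - real d) + 1))) (c * real n powr (1 / (real d + 1)))
          \<le> c * real n powr (1/real E)"
    proof (cases "2*(r-d)+1 \<ge> d+1")
      case True
      hence "real E = 2 * (real r - real d) + 1" unfolding E_def using dr by (simp add: of_nat_diff)
      thus ?thesis by simp
    next
      case False
      hence "real E = real d + 1" unfolding E_def by simp
      thus ?thesis by simp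
    qed
    thus "min (c * real n powr (1 / (2 * (real r - real d) + 1))) (c * real n powr (1 / (real d + 1)))
          \<le> real (C_sunflower r n d t)" using main unfolding k0_def by linarith
  qed
qed

end
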